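(* An instance of the UDODOSP is feasible if and only if there are integers $W^d$ for $0\le d\le D$ with $W^D-W^0\le N U_w$; $\;N D+W^0-W^D\le N U_o$; $\;W^{d+u_w}-W^{d-1}\le N u_w$ for all $1\le d\le D-u_w$; $\;N\le W^{d+u_o}-W^{d-1}$ for all $1\le d\le D-u_o$; and $\;r_l^d\le W^d-W^{d-1}\le r_u^d$ for all $1\le d\le D$.
   Context: An instance of the Days On Days Off Scheduling Problem (DODOSP) consists of integers $D\ge 1$ (days), $N\ge 1$ (workers), bounds $l_w,u_w,l_o,u_o,U_w,U_o\in\mathbb{N}$, and for each day $d\in\{1,\dots,D\}$ integers $0\le r_l^d\le r_u^d\le N$. A schedule is a map $f:\{n_1,\dots,n_N\}\times\{1,\dots,D\}\to\{\mathrm{ON},\mathrm{OFF}\}$ (not cyclic). A work period (resp. off period) of a worker is an inclusion-wise maximal set of consecutive days on which the worker is ON (resp. OFF). A schedule is feasible if on every day $d$ the number of workers that are ON lies in $[r_l^d,r_u^d]$, every work period has length between $l_w$ and $u_w$, every off period has length between $l_o$ and $u_o$, every worker is ON on at most $U_w$ days and OFF on at most $U_o$ days. An instance is feasible if a feasible schedule exists. The UDODOSP is the DODOSP restricted to instances with $l_w=l_o=1$. *)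

theory Defs
  imports Main
begin

text \<open>A schedule: workers are indexed 0..N-1 (standing for n_1..n_N), days are 1..D.
  s i d = True means worker i is ON on day d, False means OFF.
  Only values with i < N and 1 \<le> d \<le> D are relevant.\<close>

type_synonym schedule = "nat \<Rightarrow> nat \<Rightarrow> bool"

definition is_period :: "nat \<Rightarrow> schedule \<Rightarrow> nat \<Rightarrow> bool \<Rightarrow> nat \<Rightarrow> nat \<Rightarrow> bool" where
  "is_period D s i v a b \<longleftrightarrow>
     1 \<le> a \<and> a \<le> b \<and> b \<le> D \<and>
     (\<forall>d\<in>{a..b}. s i d = v) \<and>
     (a = 1 \<or> s i (a - 1) \<noteq> v) \<and>
     (b = D \<or> s i (b + 1) \<noteq> v)"

definition feasible_schedule ::
  "nat \<Rightarrow> nat \<Rightarrow> nat \<Rightarrow> nat \<Rightarrow> nat \<Rightarrow> nat \<Rightarrow> nat \<Rightarrow> nat \<Rightarrow>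
   (nat \<Rightarrow> nat) \<Rightarrow> (nat \<Rightarrow> nat) \<Rightarrow> schedule \<Rightarrow> bool" where
  "feasible_schedule D N lw uw lo uo Uw Uo rl ru s \<longleftrightarrow>
     (\<forall>d\<in>{1..D}. rl d \<le> card {i. i < N \<and> s i d} \<and> card {i. i < N \<and> s i d} \<le> ru d) \<and>
     (\<forall>i<N. \<forall>a b. is_period D s i True a b \<longrightarrow> lw \<le> b + 1 - a \<and> b + 1 - a \<le> uw) \<and>
     (\<forall>i<N. \<forall>a b. is_period D s i False a b \<longrightarrow> lo \<le> b + 1 - a \<and> b + 1 - a \<le> uo) \<and>
     (\<forall>i<N. card {d\<in>{1..D}. s i d} \<le> Uw) \<and>
     (\<forall>i<N. card {d\<in>{1..D}. \<not> s i d} \<le> Uo)"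

definition dodosp_feasible ::
  "nat \<Rightarrow> nat \<Rightarrow> nat \<Rightarrow> nat \<Rightarrow> nat \<Rightarrow> nat \<Rightarrow> nat \<Rightarrow> nat \<Rightarrow>
   (nat \<Rightarrow> nat) \<Rightarrow> (nat \<Rightarrow> nat) \<Rightarrow> bool" where
  "dodosp_feasible D N lw uw lo uo Uw Uo rl ru \<longleftrightarrow>
     (\<exists>s. feasible_schedule D N lw uw lo uo Uw Uo rl ru s)"

end

theory Submission
  imports Defs
begin


lemma card_int_sum:
  assumes "finite A"
  shows "int (card {x\<in>A. P x}) = (\<Sum>x\<in>A. of_bool (P x))"
proof -
  have "{x\<in>A. P x} = A \<inter> {x. P x}" by auto
  then show ?thesis using assms by simp
qed

lemma telescope:
  fixes F :: "nat \<Rightarrow> int"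
  assumes "1 \<le> a" "a \<le> b + 1"
  shows "(\<Sum>e\<in>{a..b}. F e - F (e - 1)) = F b - F (a - 1)"
  using assms
proof (induction b)
  case 0
  then have "a = 1" by simp
  then show ?case by simp
next
  case (Suc b)
  show ?case
  proof (cases "a = Suc b + 1")
    case True then show ?thesis by simp
  next
    case False
    then have "a \<le> b + 1" using Suc.prems by simp
    then show ?thesis using Suc by simp
  qed
qed

lemma hermite_step:
  fixes x :: int and N :: nat
  assumes "N \<ge> 1"
  shows "(\<Sum>i<N. (x + 1 + int i) div int N) = (\<Sum>i<N. (x + int i) div int N) + 1"
proof -
  let ?f = "\<lambda>i::nat. (x + int i) div int N"
  have "(\<Sum>i<Suc N. ?f i) = ?f 0 + (\<Sum>i<N. ?f (Suc i))" by (rule sum.lessThan_Suc_shift)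
  moreover have "(\<Sum>i<Suc N. ?f i) = (\<Sum>i<N. ?f i) + ?f N" by simp
  moreover have "?f N = ?f 0 + 1" using assms div_add_self2[of "int N" x] by simp
  moreover have "(\<Sum>i<N. ?f (Suc i)) = (\<Sum>i<N. (x + 1 + int i) div int N)"
    by (simp add: algebra_simps)
  ultimately show ?thesis by linarith
qed

lemma hermite:
  fixes x :: int and N :: nat
  assumes "N \<ge> 1"
  shows "(\<Sum>i<N. (x + int i) div int N) = x"
proof (induction x rule: int_induct[where k=0])
  case base
  have "(\<Sum>i<N. (0 + int i) div int N) = (\<Sum>i<N. 0::int)"
    by (rule sum.cong) auto
  then show ?case by simp
next
  case (step1 i) then show ?case using hermite_step[OF assms, of i] by simp
next
  case (step2 i) then show ?case using hermite_step[OF assms, of "i - 1"] by simp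
qed

lemma ext_left:
  fixes s :: schedule and a :: nat
  assumes "1 \<le> a" "s i a = v"
  shows "\<exists>a'. 1 \<le> a' \<and> a' \<le> a \<and> (\<forall>e\<in>{a'..a}. s i e = v) \<and> (a' = 1 \<or> s i (a' - 1) \<noteq> v)"
  using assms
proof (induction a)
  case 0 then show ?case by simp
next
  case (Suc m)
  show ?case
  proof (cases "m = 0 \<or> s i m \<noteq> v")
    case True then show ?thesis using Suc.prems
      by (intro exI[of _ "Suc m"]) auto
  next
    case False
    then obtain a' where a': "1 \<le> a'" "a' \<le> m" "\<forall>e\<in>{a'..m}. s i e = v" "a' = 1 \<or> s i (a' - 1) \<noteq> v"
      using Suc.IH by auto
    have "\<forall>e\<in>{a'..Suc m}. s i e = v" using a'(3) Suc.prems by (auto simp: le_Suc_eq)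
    then show ?thesis using a' by (intro exI[of _ a']) auto
  qed
qed

lemma ext_right_aux:
  fixes s :: schedule and b n D :: nat
  shows "D - b = n \<Longrightarrow> b \<le> D \<Longrightarrow> s i b = v \<Longrightarrow>
    \<exists>b'. b \<le> b' \<and> b' \<le> D \<and> (\<forall>e\<in>{b..b'}. s i e = v) \<and> (b' = D \<or> s i (b' + 1) \<noteq> v)"
proof (induction n arbitrary: b)
  case 0 then show ?case by (intro exI[of _ b]) auto
next
  case (Suc n)
  show ?case
  proof (cases "s i (b + 1) = v")
    case False then show ?thesis using Suc.prems by (intro exI[of _ b]) auto
  next
    case True
    have h1: "b + 1 \<le> D" "D - (b + 1) = n" using Suc.prems by auto
    obtain b' where b': "b + 1 \<le> b'" "b' \<le> D" "\<forall>e\<in>{b+1..b'}. s i e = v" "b' = D \<or> s i (b' + 1) \<noteq> v"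
      using Suc.IH[OF h1(2) h1(1) True] by blast
    have "\<forall>e\<in>{b..b'}. s i e = v" using b'(3) Suc.prems
      by (metis Suc_eq_plus1 atLeastAtMost_iff le_antisym not_less_eq_eq)
    then show ?thesis using b' by (intro exI[of _ b']) auto
  qed
qed

lemma max_period:
  fixes s :: schedule
  assumes "1 \<le> a" "a \<le> b" "b \<le> D" "\<forall>e\<in>{a..b}. s i e = v"
  shows "\<exists>a' b'. is_period D s i v a' b' \<and> a' \<le> a \<and> b \<le> b'"
proof -
  obtain a' where a': "1 \<le> a'" "a' \<le> a" "\<forall>e\<in>{a'..a}. s i e = v" "a' = 1 \<or> s i (a' - 1) \<noteq> v"
    using ext_left[of a s i v] assms by auto
  obtain b' where b': "b \<le> b'" "b' \<le> D" "\<forall>e\<in>{b..b'}. s i e = v" "b' = D \<or> s i (b' + 1) \<noteq> v"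
    using ext_right_aux[of D b _ s i v] assms by auto
  have "\<forall>e\<in>{a'..b'}. s i e = v"
  proof
    fix e assume "e \<in> {a'..b'}"
    then show "s i e = v" using a'(3) b'(3) assms(4)
      by (cases "e \<le> a"; cases "e \<ge> b") auto
  qed
  then have "is_period D s i v a' b'" unfolding is_period_def using a' b' assms by auto
  then show ?thesis using a' b' by auto
qed

lemma nec:
  fixes s :: schedule
  assumes fs: "feasible_schedule D N 1 uw 1 uo Uw Uo rl ru s"
  shows "\<exists>W :: nat \<Rightarrow> int.
       W D - W 0 \<le> int N * int Uw \<and>
       int N * int D + W 0 - W D \<le> int N * int Uo \<and>
       (\<forall>d. 1 \<le> d \<and> d + uw \<le> D \<longrightarrow> W (d + uw) - W (d - 1) \<le> int N * int uw) \<and>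
       (\<forall>d. 1 \<le> d \<and> d + uo \<le> D \<longrightarrow> int N \<le> W (d + uo) - W (d - 1)) \<and>
       (\<forall>d. 1 \<le> d \<and> d \<le> D \<longrightarrow> int (rl d) \<le> W d - W (d - 1) \<and> W d - W (d - 1) \<le> int (ru d))"
proof -
  note fs' = fs[unfolded feasible_schedule_def]
  define F where "F e = int (card {i. i<N \<and> s i e})" for e
  define W where "W d = (\<Sum>e\<in>{1..d}. F e)" for d
  have Fsum: "F e = (\<Sum>i<N. of_bool (s i e))" for e
  proof -
    have "{i. i<N \<and> s i e} = {i\<in>{..<N}. s i e}" by auto
    then show ?thesis unfolding F_def using card_int_sum[of "{..<N}" "\<lambda>i. s i e"] by simp
  qed
  have W0: "W 0 = 0" unfolding W_def by simp
  have Wdiff: "W e - W (e - 1) = F e" if e1: "1 \<le> e" for e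
  proof -
    obtain m where "e = Suc m" using e1 by (cases e) auto
    then show ?thesis unfolding W_def by simp
  qed
  have Wwin: "W b - W (a - 1) = (\<Sum>i<N. int (card {e\<in>{a..b}. s i e}))"
    if "1 \<le> a" "a \<le> b + 1" for a b
  proof -
    have "W b - W (a - 1) = (\<Sum>e\<in>{a..b}. W e - W (e - 1))"
      using telescope[OF that, of W] by simp
    also have "\<dots> = (\<Sum>e\<in>{a..b}. F e)"
      by (rule sum.cong) (use that Wdiff in auto)
    also have "\<dots> = (\<Sum>e\<in>{a..b}. \<Sum>i<N. of_bool (s i e))" by (simp add: Fsum)
    also have "\<dots> = (\<Sum>i<N. \<Sum>e\<in>{a..b}. of_bool (s i e))" by (rule sum.swap)
    also have "\<dots> = (\<Sum>i<N. int (card {e\<in>{a..b}. s i e}))"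
      by (rule sum.cong[OF refl], rule card_int_sum[symmetric]) simp
    finally show ?thesis .
  qed
  have c1: "W D - W 0 \<le> int N * int Uw"
  proof -
    have "W D - W 0 = (\<Sum>i<N. int (card {e\<in>{1..D}. s i e}))" using Wwin[of 1 D] by simp
    also have "\<dots> \<le> of_nat (card {..<N}) * int Uw"
      by (rule sum_bounded_above) (use fs' in auto)
    finally show ?thesis by simp
  qed
  have c2: "int N * int D + W 0 - W D \<le> int N * int Uo"
  proof -
    have lb: "int (card {e\<in>{1..D}. s i e}) \<ge> int D - int Uo" if "i < N" for i
    proof -
      have "int (card {e\<in>{1..D}. \<not> s i e}) = (\<Sum>e\<in>{1..D}. of_bool (\<not> s i e))"
        by (rule card_int_sum) simp
      also have "\<dots> = (\<Sum>e\<in>{1..D}. 1 - of_bool (s i e))" by (rule sum.cong) auto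
      also have "\<dots> = int D - int (card {e\<in>{1..D}. s i e})"
        using card_int_sum[of "{1..D}" "s i"] by (simp add: sum_subtractf del: sum_of_bool_eq)
      finally show ?thesis using fs' that by force
    qed
    have "W D - W 0 = (\<Sum>i<N. int (card {e\<in>{1..D}. s i e}))" using Wwin[of 1 D] by simp
    also have "\<dots> \<ge> of_nat (card {..<N}) * (int D - int Uo)"
      by (rule sum_bounded_below) (use lb in auto)
    finally show ?thesis by (simp add: algebra_simps)
  qed
  have c3: "W (d + uw) - W (d - 1) \<le> int N * int uw" if "1 \<le> d" "d + uw \<le> D" for d
  proof -
    have each: "int (card {e\<in>{d..d+uw}. s i e}) \<le> int uw" if "i < N" for i
    proof (cases "\<forall>e\<in>{d..d+uw}. s i e")
      case True
      then obtain a' b' where "is_period D s i True a' b'" "a' \<le> d" "d + uw \<le> b'"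
        using max_period[of d "d+uw" D s i True] \<open>1 \<le> d\<close> \<open>d + uw \<le> D\<close> by auto
      then show ?thesis using fs' that by fastforce
    next
      case False
      then obtain e where e: "e \<in> {d..d+uw}" "\<not> s i e" by auto
      have "card {e\<in>{d..d+uw}. s i e} \<le> card ({d..d+uw} - {e})"
        by (rule card_mono) (use e in auto)
      also have "\<dots> = uw" using e by simp
      finally show ?thesis by simp
    qed
    have "W (d + uw) - W (d - 1) = (\<Sum>i<N. int (card {e\<in>{d..d+uw}. s i e}))"
      using Wwin[of d "d+uw"] that by simp
    also have "\<dots> \<le> of_nat (card {..<N}) * int uw"
      by (rule sum_bounded_above) (use each in auto)
    finally show ?thesis by simp
  qed
  have c4: "int N \<le> W (d + uo) - W (d - 1)" if "1 \<le> d" "d + uo \<le> D" for d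
  proof -
    have each: "int (card {e\<in>{d..d+uo}. s i e}) \<ge> 1" if "i < N" for i
    proof (cases "\<forall>e\<in>{d..d+uo}. \<not> s i e")
      case True
      then have "\<forall>e\<in>{d..d+uo}. s i e = False" by auto
      then obtain a' b' where "is_period D s i False a' b'" "a' \<le> d" "d + uo \<le> b'"
        using max_period[of d "d+uo" D s i False] \<open>1 \<le> d\<close> \<open>d + uo \<le> D\<close> by (meson le_add1)
      then show ?thesis using fs' that by fastforce
    next
      case False
      then obtain e where e: "e \<in> {d..d+uo}" "s i e" by auto
      have "card {e\<in>{d..d+uo}. s i e} > 0"
        by (subst card_gt_0_iff) (use e in auto)
      then show ?thesis by simp
    qed
    have "W (d + uo) - W (d - 1) = (\<Sum>i<N. int (card {e\<in>{d..d+uo}. s i e}))"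
      using Wwin[of d "d+uo"] that by simp
    also have "\<dots> \<ge> of_nat (card {..<N}) * 1"
      by (rule sum_bounded_below) (use each in auto)
    finally show ?thesis by simp
  qed
  have c5: "int (rl d) \<le> W d - W (d - 1) \<and> W d - W (d - 1) \<le> int (ru d)" if "1 \<le> d" "d \<le> D" for d
    using Wdiff[OF that(1)] fs' that unfolding F_def by auto
  show ?thesis using c1 c2 c3 c4 c5 by blast
qed


lemma suf:
  fixes W :: "nat \<Rightarrow> int"
  assumes N1: "N \<ge> 1"
    and r: "\<forall>d\<in>{1..D}. rl d \<le> ru d \<and> ru d \<le> N"
    and c1: "W D - W 0 \<le> int N * int Uw"
    and c2: "int N * int D + W 0 - W D \<le> int N * int Uo"
    and c3: "\<forall>d. 1 \<le> d \<and> d + uw \<le> D \<longrightarrow> W (d + uw) - W (d - 1) \<le> int N * int uw"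
    and c4: "\<forall>d. 1 \<le> d \<and> d + uo \<le> D \<longrightarrow> int N \<le> W (d + uo) - W (d - 1)"
    and c5: "\<forall>d. 1 \<le> d \<and> d \<le> D \<longrightarrow> int (rl d) \<le> W d - W (d - 1) \<and> W d - W (d - 1) \<le> int (ru d)"
  shows "\<exists>s. feasible_schedule D N 1 uw 1 uo Uw Uo rl ru s"
proof -
  define h where "h i x = (x + int i) div int N" for i :: nat and x :: int
  define s where "s i d = (h i (W (d - 1)) < h i (W d))" for i d
  have Npos: "int N > 0" using N1 by simp
  have hmono: "h i x \<le> h i y" if "x \<le> y" for i x y
    unfolding h_def using that Npos by (simp add: zdiv_mono1)
  have hshift: "h i (x + int N * k) = h i x + k" for i x k
  proof -
    have eq: "x + int N * k + int i = (x + int i) + k * int N" by (simp add: algebra_simps)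
    have nz: "int N \<noteq> 0" using Npos by simp
    have "(x + int N * k + int i) div int N = k + (x + int i) div int N"
      unfolding eq by (rule div_mult_self1[OF nz])
    then show ?thesis unfolding h_def by simp
  qed
  have ind: "(of_bool (s i d) :: int) = h i (W d) - h i (W (d - 1))" if "1 \<le> d" "d \<le> D" for i d
  proof -
    have a: "W (d - 1) \<le> W d" "W d \<le> W (d - 1) + int N * 1"
      using c5 r that by force+
    have "h i (W (d - 1)) \<le> h i (W d)" using hmono a by simp
    moreover have "h i (W d) \<le> h i (W (d - 1)) + 1"
      using hmono[OF a(2), of i] hshift[of i "W (d - 1)" 1] by simp
    ultimately show ?thesis unfolding s_def by auto
  qed
  have sumind: "(\<Sum>e\<in>{a..b}. (of_bool (s i e) :: int)) = h i (W b) - h i (W (a - 1))"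
    if "1 \<le> a" "a \<le> b + 1" "b \<le> D" for i a b
  proof -
    have "(\<Sum>e\<in>{a..b}. (of_bool (s i e) :: int)) = (\<Sum>e\<in>{a..b}. h i (W e) - h i (W (e - 1)))"
      by (rule sum.cong) (use that ind in auto)
    also have "\<dots> = h i (W b) - h i (W (a - 1))"
      using telescope[OF that(1,2), of "\<lambda>e. h i (W e)"] by simp
    finally show ?thesis .
  qed
  have daily: "int (card {i. i < N \<and> s i d}) = W d - W (d - 1)" if "1 \<le> d" "d \<le> D" for d
  proof -
    have "{i. i<N \<and> s i d} = {i\<in>{..<N}. s i d}" by auto
    then have "int (card {i. i < N \<and> s i d}) = (\<Sum>i<N. of_bool (s i d))"
      using card_int_sum[of "{..<N}" "\<lambda>i. s i d"] by simp
    also have "\<dots> = (\<Sum>i<N. h i (W d) - h i (W (d - 1)))"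
      by (rule sum.cong) (use ind that in auto)
    also have "\<dots> = W d - W (d - 1)"
      unfolding sum_subtractf h_def using hermite[OF N1] by simp
    finally show ?thesis .
  qed
  have f1: "\<forall>d\<in>{1..D}. rl d \<le> card {i. i < N \<and> s i d} \<and> card {i. i < N \<and> s i d} \<le> ru d"
  proof
    fix d assume "d \<in> {1..D}"
    then have "1 \<le> d" "d \<le> D" by auto
    then show "rl d \<le> card {i. i < N \<and> s i d} \<and> card {i. i < N \<and> s i d} \<le> ru d"
      using daily c5 by force
  qed
  have f2: "1 \<le> b + 1 - a \<and> b + 1 - a \<le> uw" if "is_period D s i True a b" for i a b
  proof -
    have p: "1 \<le> a" "a \<le> b" "b \<le> D" "\<forall>e\<in>{a..b}. s i e" using that unfolding is_period_def by auto
    have "b + 1 - a \<le> uw"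
    proof (rule ccontr)
      assume "\<not> ?thesis"
      then have q: "a + uw \<le> b" by simp
      have "(\<Sum>e\<in>{a..a+uw}. (of_bool (s i e) :: int)) = (\<Sum>e\<in>{a..a+uw}. 1)"
        by (rule sum.cong) (use p q in auto)
      then have "h i (W (a + uw)) - h i (W (a - 1)) = int uw + 1"
        using sumind[of a "a + uw" i] p q by simp
      moreover have "h i (W (a + uw)) \<le> h i (W (a - 1)) + int uw"
        using hmono[of "W (a + uw)" "W (a - 1) + int N * int uw" i] hshift[of i "W (a - 1)" "int uw"]
          c3 p q by force
      ultimately show False by simp
    qed
    then show ?thesis using p by simp
  qed
  have f3: "1 \<le> b + 1 - a \<and> b + 1 - a \<le> uo" if "is_period D s i False a b" for i a b
  proof -
    have p: "1 \<le> a" "a \<le> b" "b \<le> D" "\<forall>e\<in>{a..b}. \<not> s i e" using that unfolding is_period_def by auto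
    have "b + 1 - a \<le> uo"
    proof (rule ccontr)
      assume "\<not> ?thesis"
      then have q: "a + uo \<le> b" by simp
      have "(\<Sum>e\<in>{a..a+uo}. (of_bool (s i e) :: int)) = (\<Sum>e\<in>{a..a+uo}. 0)"
        by (rule sum.cong) (use p q in auto)
      then have "h i (W (a + uo)) - h i (W (a - 1)) = 0"
        using sumind[of a "a + uo" i] p q by simp
      moreover have "h i (W (a + uo)) \<ge> h i (W (a - 1)) + 1"
        using hmono[of "W (a - 1) + int N * 1" "W (a + uo)" i] hshift[of i "W (a - 1)" 1]
          c4 p q by force
      ultimately show False by simp
    qed
    then show ?thesis using p by simp
  qed
  have tot: "int (card {d\<in>{1..D}. s i d}) = h i (W D) - h i (W 0)" for i
    using card_int_sum[of "{1..D}" "s i"] sumind[of 1 D i] by (simp del: sum_of_bool_eq)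
  have f4: "card {d\<in>{1..D}. s i d} \<le> Uw" for i
  proof -
    have "h i (W D) \<le> h i (W 0) + int Uw"
      using hmono[of "W D" "W 0 + int N * int Uw" i] hshift[of i "W 0" "int Uw"] c1 by simp
    then show ?thesis using tot[of i] by simp
  qed
  have f5: "card {d\<in>{1..D}. \<not> s i d} \<le> Uo" for i
  proof -
    have "int (card {e\<in>{1..D}. \<not> s i e}) = (\<Sum>e\<in>{1..D}. of_bool (\<not> s i e))"
      by (rule card_int_sum) simp
    also have "\<dots> = (\<Sum>e\<in>{1..D}. 1 - of_bool (s i e))" by (rule sum.cong) auto
    also have "\<dots> = int D - int (card {e\<in>{1..D}. s i e})"
      using card_int_sum[of "{1..D}" "s i"] by (simp add: sum_subtractf del: sum_of_bool_eq)
    finally have e: "int (card {e\<in>{1..D}. \<not> s i e}) = int D - (h i (W D) - h i (W 0))"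
      using tot by simp
    have "h i (W 0) + (int D - int Uo) \<le> h i (W D)"
      using hmono[of "W 0 + int N * (int D - int Uo)" "W D" i] hshift[of i "W 0" "int D - int Uo"] c2
      by (simp add: algebra_simps)
    then show ?thesis using e by simp
  qed
  have "feasible_schedule D N 1 uw 1 uo Uw Uo rl ru s"
    unfolding feasible_schedule_def using f1 f2 f3 f4 f5 by blast
  then show ?thesis by blast
qed


theorem corollary4p8:
  fixes D N uw uo Uw Uo :: nat and rl ru :: "nat \<Rightarrow> nat"
  assumes "D \<ge> 1" and "N \<ge> 1"
    and "\<forall>d\<in>{1..D}. rl d \<le> ru d \<and> ru d \<le> N"
  shows "dodosp_feasible D N 1 uw 1 uo Uw Uo rl ru \<longleftrightarrow>
    (\<exists>W :: nat \<Rightarrow> int.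
       W D - W 0 \<le> int N * int Uw \<and>
       int N * int D + W 0 - W D \<le> int N * int Uo \<and>
       (\<forall>d. 1 \<le> d \<and> d + uw \<le> D \<longrightarrow> W (d + uw) - W (d - 1) \<le> int N * int uw) \<and>
       (\<forall>d. 1 \<le> d \<and> d + uo \<le> D \<longrightarrow> int N \<le> W (d + uo) - W (d - 1)) \<and>
       (\<forall>d. 1 \<le> d \<and> d \<le> D \<longrightarrow> int (rl d) \<le> W d - W (d - 1) \<and> W d - W (d - 1) \<le> int (ru d)))"
proof
  assume "dodosp_feasible D N 1 uw 1 uo Uw Uo rl ru"
  then obtain s where "feasible_schedule D N 1 uw 1 uo Uw Uo rl ru s"
    unfolding dodosp_feasible_def by blast
  then show "\<exists>W :: nat \<Rightarrow> int.
       W D - W 0 \<le> int N * int Uw \<and>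
       int N * int D + W 0 - W D \<le> int N * int Uo \<and>
       (\<forall>d. 1 \<le> d \<and> d + uw \<le> D \<longrightarrow> W (d + uw) - W (d - 1) \<le> int N * int uw) \<and>
       (\<forall>d. 1 \<le> d \<and> d + uo \<le> D \<longrightarrow> int N \<le> W (d + uo) - W (d - 1)) \<and>
       (\<forall>d. 1 \<le> d \<and> d \<le> D \<longrightarrow> int (rl d) \<le> W d - W (d - 1) \<and> W d - W (d - 1) \<le> int (ru d))"
    by (rule nec)
next
  assume "\<exists>W :: nat \<Rightarrow> int.
       W D - W 0 \<le> int N * int Uw \<and>
       int N * int D + W 0 - W D \<le> int N * int Uo \<and>
       (\<forall>d. 1 \<le> d \<and> d + uw \<le> D \<longrightarrow> W (d + uw) - W (d - 1) \<le> int N * int uw) \<and>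
       (\<forall>d. 1 \<le> d \<and> d + uo \<le> D \<longrightarrow> int N \<le> W (d + uo) - W (d - 1)) \<and>
       (\<forall>d. 1 \<le> d \<and> d \<le> D \<longrightarrow> int (rl d) \<le> W d - W (d - 1) \<and> W d - W (d - 1) \<le> int (ru d))"
  then obtain W :: "nat \<Rightarrow> int" where
       "W D - W 0 \<le> int N * int Uw"
       "int N * int D + W 0 - W D \<le> int N * int Uo"
       "\<forall>d. 1 \<le> d \<and> d + uw \<le> D \<longrightarrow> W (d + uw) - W (d - 1) \<le> int N * int uw"
       "\<forall>d. 1 \<le> d \<and> d + uo \<le> D \<longrightarrow> int N \<le> W (d + uo) - W (d - 1)"
       "\<forall>d. 1 \<le> d \<and> d \<le> D \<longrightarrow> int (rl d) \<le> W d - W (d - 1) \<and> W d - W (d - 1) \<le> int (ru d)"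
    by blast
  then show "dodosp_feasible D N 1 uw 1 uo Uw Uo rl ru"
    unfolding dodosp_feasible_def using suf[OF assms(2) assms(3)] by blast
qed

end
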